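(* In the setting described in the context, for any slot allocation $\tau$ of the slot set $\Lambda$, the associated service placement $X^\tau$ is feasible, i.e. $\sum_{i\in S}s_i\mathbf 1[j\in X^\tau_i]\le c_j$ for all $j\in V$.
   Context: An SPSC instance: finite sets $S$ (services), $V$ (nodes), $U$ (users); sizes $s_i>0$; capacities $c_j>0$; for each user $k$ a service $i_k\in S$, a set $T_k\subseteq V$, a reward $w_k>0$. A service placement $X=\{X_i\subseteq V:i\in S\}$ is feasible iff $\sum_is_i\mathbf 1[j\in X_i]\le c_j$ for all $j$. Let $\{x_{ij}\},\{y_k\}$ be an optimal solution of the LP with nonnegative variables: maximize $\sum_ky_kw_k$ s.t. $y_k\le\sum_{j\in T_k}x_{i_kj}$, $y_k\le1$; $\sum_ix_{ij}s_i\le c_j$; $x_{ij}=0$ if $s_i>c_j$; $0\le x_{ij}\le1$. Fix $\beta<1$ with $\max_is_i\le\beta\min_jc_j$; $\gamma:=1-\sqrt\beta$, $\delta:=(1-\sqrt\beta)^2$, $\mathbb N=\{1,2,\dots\}$. For $j\in V,q\in\mathbb N$: $P_j^q:=\{i\in S:\gamma^qc_j\beta<s_i\le\gamma^{q-1}c_j\beta\}$, $d_j^q:=\sum_{i\in P_j^q}x_{ij}$, $v_j:=\delta c_j/\sum_{i\in S}s_ix_{ij}$, $n_j^q:=\lceil v_jd_j^q\rceil$. The slot set $\Lambda$: for every $j,q$ with $P_j^q\ne\emptyset$ create $n_j^q$ slots $\sigma$ with node $\nu(\sigma)=j$ and class $\kappa(\sigma)=q$. A slot allocation is $\tau:\Lambda\to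 S$ with $\tau(\sigma)\in P^{\kappa(\sigma)}_{\nu(\sigma)}$; its associated placement is $X^\tau_i:=\{j\in V:\exists\sigma\in\Lambda,\ \nu(\sigma)=j,\ \tau(\sigma)=i\}$. *)

theory Defs
  imports Complex_Main
begin

text \<open>SPSC instance: services of type 's, nodes of type 'v, users of type 'u, with finite
  carrier sets S, V, U; sizes sz, capacities c; user k requests service ik k, can be served
  from nodes T k, and has reward w k.\<close>

definition lp_feasible ::
  "'s set \<Rightarrow> 'v set \<Rightarrow> 'u set \<Rightarrow> ('s \<Rightarrow> real) \<Rightarrow> ('v \<Rightarrow> real) \<Rightarrow> ('u \<Rightarrow> 's) \<Rightarrow> ('u \<Rightarrow> 'v set)
   \<Rightarrow> ('s \<Rightarrow> 'v \<Rightarrow> real) \<Rightarrow> ('u \<Rightarrow> real) \<Rightarrow> bool" where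
  "lp_feasible S V U sz c ik T x y \<longleftrightarrow>
     (\<forall>k\<in>U. 0 \<le> y k \<and> y k \<le> 1 \<and> y k \<le> (\<Sum>j\<in>T k. x (ik k) j)) \<and>
     (\<forall>j\<in>V. (\<Sum>i\<in>S. x i j * sz i) \<le> c j) \<and>
     (\<forall>i\<in>S. \<forall>j\<in>V. 0 \<le> x i j \<and> x i j \<le> 1 \<and> (sz i > c j \<longrightarrow> x i j = 0))"

definition lp_optimal ::
  "'s set \<Rightarrow> 'v set \<Rightarrow> 'u set \<Rightarrow> ('s \<Rightarrow> real) \<Rightarrow> ('v \<Rightarrow> real) \<Rightarrow> ('u \<Rightarrow> 's) \<Rightarrow> ('u \<Rightarrow> 'v set)
   \<Rightarrow> ('u \<Rightarrow> real) \<Rightarrow> ('s \<Rightarrow> 'v \<Rightarrow> real) \<Rightarrow> ('u \<Rightarrow> real) \<Rightarrow> bool" where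
  "lp_optimal S V U sz c ik T w x y \<longleftrightarrow>
     lp_feasible S V U sz c ik T x y \<and>
     (\<forall>x' y'. lp_feasible S V U sz c ik T x' y' \<longrightarrow>
        (\<Sum>k\<in>U. y' k * w k) \<le> (\<Sum>k\<in>U. y k * w k))"

definition placement_feasible ::
  "'s set \<Rightarrow> 'v set \<Rightarrow> ('s \<Rightarrow> real) \<Rightarrow> ('v \<Rightarrow> real) \<Rightarrow> ('s \<Rightarrow> 'v set) \<Rightarrow> bool" where
  "placement_feasible S V sz c X \<longleftrightarrow>
     (\<forall>j\<in>V. (\<Sum>i\<in>S. sz i * (if j \<in> X i then 1 else 0)) \<le> c j)"

definition sclass :: "'s set \<Rightarrow> ('s \<Rightarrow> real) \<Rightarrow> ('v \<Rightarrow> real) \<Rightarrow> real \<Rightarrow> 'v \<Rightarrow> nat \<Rightarrow> 's set" where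
  "sclass S sz c \<beta> j q =
     {i\<in>S. (1 - sqrt \<beta>) ^ q * c j * \<beta> < sz i \<and> sz i \<le> (1 - sqrt \<beta>) ^ (q - 1) * c j * \<beta>}"

definition dval :: "'s set \<Rightarrow> ('s \<Rightarrow> real) \<Rightarrow> ('v \<Rightarrow> real) \<Rightarrow> real \<Rightarrow> ('s \<Rightarrow> 'v \<Rightarrow> real) \<Rightarrow> 'v \<Rightarrow> nat \<Rightarrow> real" where
  "dval S sz c \<beta> x j q = (\<Sum>i\<in>sclass S sz c \<beta> j q. x i j)"

definition vval :: "'s set \<Rightarrow> ('s \<Rightarrow> real) \<Rightarrow> ('v \<Rightarrow> real) \<Rightarrow> real \<Rightarrow> ('s \<Rightarrow> 'v \<Rightarrow> real) \<Rightarrow> 'v \<Rightarrow> real" where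
  "vval S sz c \<beta> x j = (1 - sqrt \<beta>)^2 * c j / (\<Sum>i\<in>S. sz i * x i j)"

definition nslots :: "'s set \<Rightarrow> ('s \<Rightarrow> real) \<Rightarrow> ('v \<Rightarrow> real) \<Rightarrow> real \<Rightarrow> ('s \<Rightarrow> 'v \<Rightarrow> real) \<Rightarrow> 'v \<Rightarrow> nat \<Rightarrow> nat" where
  "nslots S sz c \<beta> x j q = nat \<lceil>vval S sz c \<beta> x j * dval S sz c \<beta> x j q\<rceil>"

text \<open>Slots are triples (j, q, m): node nu = j, class kappa = q, and index m < n_j^q.\<close>
definition slots :: "'s set \<Rightarrow> 'v set \<Rightarrow> ('s \<Rightarrow> real) \<Rightarrow> ('v \<Rightarrow> real) \<Rightarrow> real \<Rightarrow> ('s \<Rightarrow> 'v \<Rightarrow> real)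
    \<Rightarrow> ('v \<times> nat \<times> nat) set" where
  "slots S V sz c \<beta> x = {(j, q, m). j \<in> V \<and> q \<ge> 1 \<and> sclass S sz c \<beta> j q \<noteq> {} \<and> m < nslots S sz c \<beta> x j q}"

definition slot_node :: "'v \<times> nat \<times> nat \<Rightarrow> 'v" where "slot_node \<sigma> = fst \<sigma>"
definition slot_class :: "'v \<times> nat \<times> nat \<Rightarrow> nat" where "slot_class \<sigma> = fst (snd \<sigma>)"

definition slot_allocation ::
  "'s set \<Rightarrow> 'v set \<Rightarrow> ('s \<Rightarrow> real) \<Rightarrow> ('v \<Rightarrow> real) \<Rightarrow> real \<Rightarrow> ('s \<Rightarrow> 'v \<Rightarrow> real)
   \<Rightarrow> ('v \<times> nat \<times> nat \<Rightarrow> 's) \<Rightarrow> bool" where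
  "slot_allocation S V sz c \<beta> x \<tau> \<longleftrightarrow>
     (\<forall>\<sigma>\<in>slots S V sz c \<beta> x. \<tau> \<sigma> \<in> sclass S sz c \<beta> (slot_node \<sigma>) (slot_class \<sigma>))"

definition alloc_placement ::
  "'s set \<Rightarrow> 'v set \<Rightarrow> ('s \<Rightarrow> real) \<Rightarrow> ('v \<Rightarrow> real) \<Rightarrow> real \<Rightarrow> ('s \<Rightarrow> 'v \<Rightarrow> real)
   \<Rightarrow> ('v \<times> nat \<times> nat \<Rightarrow> 's) \<Rightarrow> 's \<Rightarrow> 'v set" where
  "alloc_placement S V sz c \<beta> x \<tau> i =
     {j\<in>V. \<exists>\<sigma>\<in>slots S V sz c \<beta> x. slot_node \<sigma> = j \<and> \<tau> \<sigma> = i}"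

end

theory Submission
  imports Defs
begin

lemma sclass_disj:
  fixes g c b :: real and sz :: "'s \<Rightarrow> real"
  assumes "0 \<le> g" "g \<le> 1" "0 < c * b"
    and "i \<in> {i\<in>S. g ^ q * c * b < sz i \<and> sz i \<le> g ^ (q - 1) * c * b}"
    and "i \<in> {i\<in>S. g ^ q' * c * b < sz i \<and> sz i \<le> g ^ (q' - 1) * c * b}"
    and "1 \<le> q" "1 \<le> q'"
  shows "q = q'"
proof (rule ccontr)
  assume ne: "q \<noteq> q'"
  have key: "\<And>a a'. a < a' \<Longrightarrow> 1 \<le> a \<Longrightarrow> g ^ a * c * b < sz i \<Longrightarrow> sz i \<le> g ^ (a' - 1) * c * b \<Longrightarrow> False"
  proof -
    fix a a' :: nat
    assume "a < a'" "1 \<le> a" and h1: "g ^ a * c * b < sz i" and h2: "sz i \<le> g ^ (a' - 1) * c * b"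
    have "g ^ (a' - 1) \<le> g ^ a" by (rule power_decreasing) (use \<open>a < a'\<close> assms(1,2) in auto)
    hence "g ^ (a' - 1) * (c * b) \<le> g ^ a * (c * b)" using assms(3) by (intro mult_right_mono) auto
    thus False using h1 h2 by (simp add: mult.assoc)
  qed
  show False
  proof (cases "q < q'")
    case True thus False using key[of q q'] assms by auto
  next
    case False hence "q' < q" using ne by auto
    thus False using key[of q' q] assms by auto
  qed
qed

theorem theorem4:
  fixes S :: "'s set" and V :: "'v set" and U :: "'u set"
    and sz :: "'s \<Rightarrow> real" and c :: "'v \<Rightarrow> real"
    and ik :: "'u \<Rightarrow> 's" and T :: "'u \<Rightarrow> 'v set" and w :: "'u \<Rightarrow> real"
    and x :: "'s \<Rightarrow> 'v \<Rightarrow> real" and y :: "'u \<Rightarrow> real"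
    and \<beta> :: real and \<tau> :: "'v \<times> nat \<times> nat \<Rightarrow> 's"
  assumes "finite S" "finite V" "finite U"
    and "\<forall>i\<in>S. sz i > 0" and "\<forall>j\<in>V. c j > 0"
    and "\<forall>k\<in>U. ik k \<in> S \<and> T k \<subseteq> V \<and> w k > 0"
    and "lp_optimal S V U sz c ik T w x y"
    and "\<beta> < 1" and "\<forall>i\<in>S. \<forall>j\<in>V. sz i \<le> \<beta> * c j"
    and "slot_allocation S V sz c \<beta> x \<tau>"
  shows "placement_feasible S V sz c (alloc_placement S V sz c \<beta> x \<tau>)"
  unfolding placement_feasible_def
proof
  fix j assume jV: "j \<in> V"
  define X where "X = alloc_placement S V sz c \<beta> x \<tau>"
  have cj: "c j > 0" using assms(5) jV by auto
  have xnn: "\<And>i. i \<in> S \<Longrightarrow> 0 \<le> x i j"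
    using assms(7) jV unfolding lp_optimal_def lp_feasible_def by auto
  have load: "(\<Sum>i\<in>S. sz i * (if j \<in> X i then 1 else 0)) = sum sz {i\<in>S. j \<in> X i}"
    using assms(1) by (auto simp: sum.inter_filter intro!: sum.cong)
  show "(\<Sum>i\<in>S. sz i * (if j \<in> X i then 1 else 0)) \<le> c j"
  proof (cases "S = {}")
    case True thus ?thesis using cj by simp
  next
    case False
    then obtain i0 where i0: "i0 \<in> S" by auto
    have bpos: "\<beta> > 0" using assms(4,9) i0 jV cj
      by (metis dual_order.strict_trans1 mult_pos_pos linorder_not_le zero_less_mult_pos2)
    define g where "g = 1 - sqrt \<beta>"
    have sb: "0 < sqrt \<beta>" "sqrt \<beta> < 1" using bpos assms(8) by auto
    have g0: "0 < g" "g < 1" using sb by (auto simp: g_def)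
    define P where "P q = sclass S sz c \<beta> j q" for q
    define Q where "Q = {q. 1 \<le> q \<and> P q \<noteq> {}}"
    define n where "n q = nslots S sz c \<beta> x j q" for q
    define d where "d q = dval S sz c \<beta> x j q" for q
    define v where "v = vval S sz c \<beta> x j"
    define W where "W = (\<Sum>i\<in>S. sz i * x i j)"
    have PS: "P q \<subseteq> S" for q unfolding P_def sclass_def by auto
    have Pdef: "P q = {i\<in>S. g ^ q * c j * \<beta> < sz i \<and> sz i \<le> g ^ (q - 1) * c j * \<beta>}" for q
      unfolding P_def sclass_def g_def by simp
    have cb: "0 < c j * \<beta>" using cj bpos by simp
    have disj: "q = q'" if "i \<in> P q" "i \<in> P q'" "1 \<le> q" "1 \<le> q'" for i q q'
      by (rule sclass_disj[where g=g and c="c j" and b=\<beta> and sz=sz and S=S and i=i])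
        (use g0 cb that in \<open>auto simp: Pdef\<close>)
    define f where "f q = (SOME i. i \<in> P q)" for q
    have fP: "f q \<in> P q" if "q \<in> Q" for q
    proof -
      from that obtain i where "i \<in> P q" unfolding Q_def by auto
      thus ?thesis unfolding f_def by (rule someI)
    qed
    have Qfin: "finite Q"
    proof (rule finite_imageD[of f])
      have "f ` Q \<subseteq> S" using fP PS by blast
      thus "finite (f ` Q)" using assms(1) finite_subset by blast
      show "inj_on f Q"
      proof (rule inj_onI)
        fix q q' assume q: "q \<in> Q" and q': "q' \<in> Q" and e: "f q = f q'"
        have "f q \<in> P q" "f q \<in> P q'" using fP[OF q] fP[OF q'] e by auto
        moreover have "1 \<le> q" "1 \<le> q'" using q q' unfolding Q_def by auto
        ultimately show "q = q'" by (rule disj)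
      qed
    qed
    define Sig where "Sig = (SIGMA q:Q. {..<n q})"
    define Sl where "Sl = {\<sigma> \<in> slots S V sz c \<beta> x. slot_node \<sigma> = j}"
    have Sl_eq: "Sl = (\<lambda>(q,m). (j,q,m)) ` Sig"
      unfolding Sl_def Sig_def slots_def slot_node_def Q_def P_def n_def using jV by auto
    have inj: "inj_on (\<lambda>(q,m). (j,q,m)) Sig" by (auto simp: inj_on_def)
    have Sigfin: "finite Sig" unfolding Sig_def using Qfin by auto
    have tauP: "\<tau> (j,q,m) \<in> P q" if "(q,m) \<in> Sig" for q m
    proof -
      have "(j,q,m) \<in> Sl" using that Sl_eq by auto
      thus ?thesis using assms(10) unfolding slot_allocation_def Sl_def P_def slot_node_def slot_class_def
        by auto
    qed
    have "sum sz {i\<in>S. j \<in> X i} \<le> sum sz (\<tau> ` Sl)"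
    proof (rule sum_mono2)
      show "finite (\<tau> ` Sl)" using Sl_eq Sigfin by auto
      show "{i\<in>S. j \<in> X i} \<subseteq> \<tau> ` Sl"
        unfolding X_def alloc_placement_def Sl_def by auto
      show "0 \<le> sz b" if "b \<in> \<tau> ` Sl - {i\<in>S. j \<in> X i}" for b
        using that tauP PS assms(4) Sl_eq by fastforce
    qed
    also have "\<dots> \<le> sum (sz \<circ> \<tau>) Sl"
      by (rule sum_image_le) (use tauP PS assms(4) Sl_eq Sigfin in fastforce)+
    also have "\<dots> = (\<Sum>(q,m)\<in>Sig. sz (\<tau> (j,q,m)))"
      unfolding Sl_eq by (subst sum.reindex[OF inj]) (simp add: case_prod_beta comp_def)
    also have "\<dots> = (\<Sum>q\<in>Q. \<Sum>m<n q. sz (\<tau> (j,q,m)))"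
      unfolding Sig_def using Qfin by (subst sum.Sigma) auto
    also have "\<dots> \<le> (\<Sum>q\<in>Q. \<Sum>m<n q. g ^ (q - 1) * c j * \<beta>)"
    proof (intro sum_mono)
      fix q m assume "q \<in> Q" "m \<in> {..<n q}"
      hence "(q,m) \<in> Sig" unfolding Sig_def by auto
      thus "sz (\<tau> (j,q,m)) \<le> g ^ (q - 1) * c j * \<beta>" using tauP unfolding Pdef by auto
    qed
    also have "\<dots> = (\<Sum>q\<in>Q. real (n q) * (g ^ (q - 1) * c j * \<beta>))" by simp
    also have "\<dots> \<le> (\<Sum>q\<in>Q. (v * d q + 1) * (g ^ (q - 1) * c j * \<beta>))"
    proof (intro sum_mono mult_right_mono)
      fix q assume "q \<in> Q"
      have W0: "0 \<le> W" unfolding W_def using xnn assms(4) by (intro sum_nonneg) (simp add: less_imp_le)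
      have v0: "0 \<le> v" unfolding v_def vval_def using W0 cj unfolding W_def by simp
      have d0: "0 \<le> d q" unfolding d_def dval_def using xnn PS[of q] P_def by (intro sum_nonneg) auto
      have "0 \<le> v * d q" using v0 d0 by simp
      thus "real (n q) \<le> v * d q + 1" unfolding n_def nslots_def v_def d_def
        by (smt (verit) of_nat_nat ceiling_correct le_of_int_ceiling of_int_0_le_iff ceiling_le_zero)
      show "0 \<le> g ^ (q - 1) * c j * \<beta>" using g0 cj bpos by simp
    qed
    also have "\<dots> = v * (\<Sum>q\<in>Q. d q * (g ^ (q - 1) * c j * \<beta>)) + c j * \<beta> * (\<Sum>q\<in>Q. g ^ (q - 1))"
      by (simp add: algebra_simps sum.distrib sum_distrib_left)
    also have "\<dots> \<le> g * c j + c j * sqrt \<beta>"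
    proof (rule add_mono)
      have "(\<Sum>q\<in>Q. d q * (g ^ (q - 1) * c j * \<beta>)) \<le> (\<Sum>q\<in>Q. \<Sum>i\<in>P q. x i j * sz i / g)"
      proof (intro sum_mono)
        fix q assume qQ: "q \<in> Q"
        have "d q * (g ^ (q - 1) * c j * \<beta>) = (\<Sum>i\<in>P q. x i j * (g ^ (q - 1) * c j * \<beta>))"
          unfolding d_def dval_def P_def by (simp add: sum_distrib_right)
        also have "\<dots> \<le> (\<Sum>i\<in>P q. x i j * sz i / g)"
        proof (intro sum_mono)
          fix i assume iP: "i \<in> P q"
          have "1 \<le> q" using qQ Q_def by auto
          hence "g ^ q = g * g ^ (q - 1)" by (metis Suc_diff_le diff_Suc_1 power_Suc)
          hence "g * (g ^ (q - 1) * c j * \<beta>) < sz i" using iP unfolding Pdef by (simp add: mult.assoc)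
          hence "g ^ (q - 1) * c j * \<beta> \<le> sz i / g" using g0 by (simp add: field_simps)
          thus "x i j * (g ^ (q - 1) * c j * \<beta>) \<le> x i j * sz i / g"
            using xnn[of i] iP PS by (metis mult_left_mono subsetD times_divide_eq_right)
        qed
        finally show "d q * (g ^ (q - 1) * c j * \<beta>) \<le> (\<Sum>i\<in>P q. x i j * sz i / g)" .
      qed
      also have "\<dots> = (\<Sum>i\<in>(\<Union>q\<in>Q. P q). x i j * sz i / g)"
      proof (rule sum.UNION_disjoint[symmetric])
        show "finite Q" by fact
        show "\<forall>q\<in>Q. finite (P q)" using PS assms(1) finite_subset by blast
        show "\<forall>q\<in>Q. \<forall>q'\<in>Q. q \<noteq> q' \<longrightarrow> P q \<inter> P q' = {}" using disj unfolding Q_def by blast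
      qed
      also have "\<dots> \<le> (\<Sum>i\<in>S. x i j * sz i / g)"
        by (rule sum_mono2) (use assms(1) PS xnn assms(4) g0 in \<open>auto intro!: divide_nonneg_pos\<close>)
      also have "\<dots> = W / g" unfolding W_def by (simp add: sum_divide_distrib mult.commute)
      finally have A: "(\<Sum>q\<in>Q. d q * (g ^ (q - 1) * c j * \<beta>)) \<le> W / g" .
      have W0: "0 \<le> W" unfolding W_def using xnn assms(4) by (intro sum_nonneg) (simp add: less_imp_le)
      have v0: "0 \<le> v" unfolding v_def vval_def using W0 cj unfolding W_def by simp
      have vW: "v * W \<le> g^2 * c j"
      proof (cases "W = 0")
        case True thus ?thesis using cj by simp
      next
        case False thus ?thesis unfolding v_def vval_def W_def g_def by simp
      qed
      have "v * (\<Sum>q\<in>Q. d q * (g ^ (q - 1) * c j * \<beta>)) \<le> v * (W / g)"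
        by (rule mult_left_mono[OF A v0])
      also have "\<dots> = (v * W) / g" by simp
      also have "\<dots> \<le> (g^2 * c j) / g" using vW g0 by (simp add: divide_right_mono)
      also have "\<dots> = g * c j" using g0 by (simp add: power2_eq_square)
      finally show "v * (\<Sum>q\<in>Q. d q * (g ^ (q - 1) * c j * \<beta>)) \<le> g * c j" .
    next
      have "(\<Sum>q\<in>Q. g ^ (q - 1)) = (\<Sum>k\<in>(\<lambda>q. q - 1) ` Q. g ^ k)"
        by (subst sum.reindex) (auto simp: inj_on_def Q_def)
      also have "\<dots> \<le> (\<Sum>k. g ^ k)"
        by (rule sum_le_suminf) (use g0 Qfin in auto)
      also have "\<dots> = 1 / (1 - g)" by (rule suminf_geometric) (use g0 in auto)
      also have "\<dots> = 1 / sqrt \<beta>" unfolding g_def by simp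
      finally have "(\<Sum>q\<in>Q. g ^ (q - 1)) \<le> 1 / sqrt \<beta>" .
      hence "c j * \<beta> * (\<Sum>q\<in>Q. g ^ (q - 1)) \<le> c j * \<beta> * (1 / sqrt \<beta>)"
        using cb by (intro mult_left_mono) auto
      also have "\<dots> = c j * sqrt \<beta>" using bpos
        by (metis less_eq_real_def real_div_sqrt times_divide_eq_right mult_1_right)
      finally show "c j * \<beta> * (\<Sum>q\<in>Q. g ^ (q - 1)) \<le> c j * sqrt \<beta>" .
    qed
    also have "\<dots> = c j" unfolding g_def by (simp add: algebra_simps)
    finally show ?thesis using load X_def by simp
  qed
qed

end
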